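(* Let $G$ be a complete tiered graph on vertex set $[n]$. Then for every $k\ge0$, $\dim_{\mathbb K}\mathcal C_G^{k}=\dim_{\mathbb K}\mathcal S_G^{k}$, where $\mathcal C_G^k$ and $\mathcal S_G^k$ denote the degree-$k$ homogeneous components of $\mathcal C_G$ and $\mathcal S_G$.
   Context: A complete tiered graph on $[n]$ with surjective tiering $\mathbf t:[n]\to[m]$ has edge set exactly $\{\{i,j\}: i<j,\ \mathbf t(i)<\mathbf t(j)\}$. $\mathbb K$ is a field of characteristic $0$. A subset $H\subseteq E(G)$ is slim if $(V(G),E(G)\setminus H)$ is connected. $\Phi_G$ is the commutative $\mathbb K$-algebra generated by variables $\phi_e$, $e\in E(G)$, subject to $\phi_e^2=0$ for all $e$ and $\prod_{e\in H}\phi_e=0$ for every non-slim $H\subseteq E(G)$. $\mathcal C_G$ is the subalgebra of $\Phi_G$ generated by $X_i=\sum_{e\in E(G)}c_{i,e}\phi_e$ ($i\in[n]$), where $c_{i,e}=1$ if $e=\{i,j\}$ with $i<j$, $c_{i,e}=-1$ if $e=\{i,j\}$ with $i>j$, and $c_{i,e}=0$ otherwise; it is graded by degree in the $X_i$. For $e=\{i,j\}$ with $i<j$ let $z_e=z_i-z_j$ and $Z_H=\prod_{e\in H}z_e$; $\mathcal S_G\subseteq\mathbb K[z_1,\dots,z_n]$ is the span of all $Z_H$ with $H$ slim, graded by polynomial degree. *)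

theory Defs
  imports Main "HOL.Vector_Spaces" "HOL-Library.Poly_Mapping"
begin

text \<open>Vertex set [n] = {1..n}; an edge {i,j} with i<j is stored as the pair (i,j).
  The complete tiered graph for tiering t has edges {i,j}, i<j, t i < t j.\<close>

definition tiered_edges :: "nat \<Rightarrow> (nat \<Rightarrow> nat) \<Rightarrow> (nat \<times> nat) set" where
  "tiered_edges n t = {(i, j). i \<in> {1..n} \<and> j \<in> {1..n} \<and> i < j \<and> t i < t j}"

definition graph_connected :: "nat set \<Rightarrow> (nat \<times> nat) set \<Rightarrow> bool" where
  "graph_connected V F \<longleftrightarrow> (\<forall>u\<in>V. \<forall>v\<in>V. (u, v) \<in> (F \<union> F\<inverse>)\<^sup>*)"

definition slim :: "nat \<Rightarrow> (nat \<Rightarrow> nat) \<Rightarrow> (nat \<times> nat) set \<Rightarrow> bool" where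
  "slim n t H \<longleftrightarrow> H \<subseteq> tiered_edges n t \<and> graph_connected {1..n} (tiered_edges n t - H)"

definition sc :: "'a::field \<Rightarrow> (('v \<Rightarrow>\<^sub>0 nat) \<Rightarrow>\<^sub>0 'a) \<Rightarrow> (('v \<Rightarrow>\<^sub>0 nat) \<Rightarrow>\<^sub>0 'a)" where
  "sc c p = Poly_Mapping.map (\<lambda>x. c * x) p"

definition pvar :: "'v \<Rightarrow> (('v \<Rightarrow>\<^sub>0 nat) \<Rightarrow>\<^sub>0 'a::comm_ring_1)" where
  "pvar x = Poly_Mapping.single (Poly_Mapping.single x 1) 1"

definition ideal_gen :: "'r::comm_ring_1 set \<Rightarrow> 'r set" where
  "ideal_gen S = {p. \<exists>F r. finite F \<and> F \<subseteq> S \<and> p = (\<Sum>s\<in>F. r s * s)}"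

definition homog :: "nat \<Rightarrow> (('v \<Rightarrow>\<^sub>0 nat) \<Rightarrow>\<^sub>0 'a::zero) \<Rightarrow> bool" where
  "homog k p \<longleftrightarrow> (\<forall>mon\<in>Poly_Mapping.keys p. (\<Sum>x\<in>Poly_Mapping.keys mon. Poly_Mapping.lookup mon x) = k)"

text \<open>Phi_G = K[phi_e : e in E] / I_G, with I_G generated by phi_e^2 and
  prod_{e in H} phi_e for non-slim H.\<close>
definition Phi_ideal :: "'a itself \<Rightarrow> nat \<Rightarrow> (nat \<Rightarrow> nat) \<Rightarrow> (((nat \<times> nat) \<Rightarrow>\<^sub>0 nat) \<Rightarrow>\<^sub>0 'a::field) set" where
  "Phi_ideal _ n t = ideal_gen
     ({pvar e * pvar e | e. e \<in> tiered_edges n t}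
      \<union> {(\<Prod>e\<in>H. pvar e) | H. H \<subseteq> tiered_edges n t \<and> \<not> slim n t H})"

text \<open>Lift of X_i = sum_e c_{i,e} phi_e to the polynomial ring.\<close>
definition Xpoly :: "nat \<Rightarrow> (nat \<Rightarrow> nat) \<Rightarrow> nat \<Rightarrow> (((nat \<times> nat) \<Rightarrow>\<^sub>0 nat) \<Rightarrow>\<^sub>0 'a::field)" where
  "Xpoly n t i = (\<Sum>e\<in>tiered_edges n t.
      (if fst e = i then pvar e else if snd e = i then - pvar e else 0))"

definition C_gens :: "'a itself \<Rightarrow> nat \<Rightarrow> (nat \<Rightarrow> nat) \<Rightarrow> nat \<Rightarrow> (((nat \<times> nat) \<Rightarrow>\<^sub>0 nat) \<Rightarrow>\<^sub>0 'a::field) set" where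
  "C_gens _ n t k = {(\<Prod>j<k. Xpoly n t (f j)) | f. \<forall>j<k. f j \<in> {1..n}}"

text \<open>dim C_G^k: C_G^k is the image in Phi_G of the span V of the lifted degree-k monomials,
  so its dimension is dim V - dim (V \<inter> I_G) (rank-nullity for the quotient map).\<close>
definition dim_C :: "'a::field itself \<Rightarrow> nat \<Rightarrow> (nat \<Rightarrow> nat) \<Rightarrow> nat \<Rightarrow> nat" where
  "dim_C A n t k =
     (let V = module.span (sc :: 'a \<Rightarrow> _) (C_gens A n t k)
      in vector_space.dim (sc :: 'a \<Rightarrow> _) V
         - vector_space.dim (sc :: 'a \<Rightarrow> _) (V \<inter> Phi_ideal A n t))"

definition Zpoly :: "(nat \<times> nat) set \<Rightarrow> ((nat \<Rightarrow>\<^sub>0 nat) \<Rightarrow>\<^sub>0 'a::field)" where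
  "Zpoly H = (\<Prod>e\<in>H. pvar (fst e) - pvar (snd e))"

definition S_space :: "'a itself \<Rightarrow> nat \<Rightarrow> (nat \<Rightarrow> nat) \<Rightarrow> ((nat \<Rightarrow>\<^sub>0 nat) \<Rightarrow>\<^sub>0 'a::field) set" where
  "S_space _ n t = module.span (sc :: 'a \<Rightarrow> _) {Zpoly H | H. slim n t H}"

definition dim_S :: "'a::field itself \<Rightarrow> nat \<Rightarrow> (nat \<Rightarrow> nat) \<Rightarrow> nat \<Rightarrow> nat" where
  "dim_S A n t k = vector_space.dim (sc :: 'a \<Rightarrow> _) {p \<in> S_space A n t. homog k p}"

end

theory Submission imports Defs "HOL-Library.FuncSet" begin

declare One_nat_def [simp del]

lemma lookup_sc[simp]: "Poly_Mapping.lookup (sc c p) x = c * Poly_Mapping.lookup p x"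
  unfolding sc_def by transfer (simp add: when_def)

lemma sc_eq: "sc c p = Poly_Mapping.single 0 c * p"
  unfolding sc_def by (rule mult_map_scale_conv_mult)

interpretation VS: vector_space "sc :: 'a::field \<Rightarrow> (('v \<Rightarrow>\<^sub>0 nat) \<Rightarrow>\<^sub>0 'a) \<Rightarrow> _"
  by unfold_locales (auto intro!: poly_mapping_eqI simp: lookup_add algebra_simps)

lemma sc_single: "sc c (Poly_Mapping.single x a) = Poly_Mapping.single x (c * a)"
  by (auto intro!: poly_mapping_eqI simp: lookup_single when_def)

lemma sum_single:
  assumes "finite A" "Poly_Mapping.keys p \<subseteq> A"
  shows "(\<Sum>x\<in>A. Poly_Mapping.single x (Poly_Mapping.lookup p x)) = p"
proof (rule poly_mapping_eqI)
  fix k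
  have "(\<Sum>x\<in>A. Poly_Mapping.lookup (Poly_Mapping.single x (Poly_Mapping.lookup p x)) k)
        = (\<Sum>x\<in>A. if x = k then Poly_Mapping.lookup p k else 0)"
    by (rule sum.cong) (auto simp: lookup_single when_def)
  also have "\<dots> = Poly_Mapping.lookup p k"
    using assms by (auto simp: in_keys_iff)
  finally show "Poly_Mapping.lookup (\<Sum>x\<in>A. Poly_Mapping.single x (Poly_Mapping.lookup p x)) k = Poly_Mapping.lookup p k"
    by (simp add: lookup_sum)
qed

lemma lookup_var_mult:
  fixes Q :: "('v \<Rightarrow>\<^sub>0 nat) \<Rightarrow>\<^sub>0 'a::comm_ring_1"
  shows "Poly_Mapping.lookup (Poly_Mapping.single (Poly_Mapping.single x 1) c * Q) H
    = (if 0 < Poly_Mapping.lookup H x then c * Poly_Mapping.lookup Q (H - Poly_Mapping.single x 1) else 0)"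
proof -
  have Q: "Q = (\<Sum>q\<in>Poly_Mapping.keys Q. Poly_Mapping.single q (Poly_Mapping.lookup Q q))"
    by (simp add: sum_single)
  have "Poly_Mapping.single (Poly_Mapping.single x 1) c * Q
     = (\<Sum>q\<in>Poly_Mapping.keys Q. Poly_Mapping.single (Poly_Mapping.single x 1 + q) (c * Poly_Mapping.lookup Q q))"
    by (subst Q) (simp add: sum_distrib_left mult_single)
  then have L: "Poly_Mapping.lookup (Poly_Mapping.single (Poly_Mapping.single x 1) c * Q) H
     = (\<Sum>q\<in>Poly_Mapping.keys Q. if Poly_Mapping.single x 1 + q = H then c * Poly_Mapping.lookup Q q else 0)"
    by (simp add: lookup_sum lookup_single when_def)
  have eq: "(Poly_Mapping.single x 1 + q = H) \<longleftrightarrow> (0 < Poly_Mapping.lookup H x \<and> q = H - Poly_Mapping.single x 1)" for q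
  proof
    assume a: "Poly_Mapping.single x 1 + q = H"
    then have "Poly_Mapping.lookup H y = Poly_Mapping.lookup (Poly_Mapping.single x 1) y + Poly_Mapping.lookup q y" for y
      by (auto simp: lookup_add)
    then show "0 < Poly_Mapping.lookup H x \<and> q = H - Poly_Mapping.single x 1"
      by (auto intro!: poly_mapping_eqI simp: lookup_minus lookup_single when_def)
  next
    assume a: "0 < Poly_Mapping.lookup H x \<and> q = H - Poly_Mapping.single x 1"
    then show "Poly_Mapping.single x 1 + q = H"
      by (auto intro!: poly_mapping_eqI simp: lookup_add lookup_minus lookup_single when_def)
  qed
  show ?thesis
    unfolding L eq
    by (cases "0 < Poly_Mapping.lookup H x") (auto simp: in_keys_iff)
qed

definition dg :: "('v \<Rightarrow>\<^sub>0 nat) \<Rightarrow> nat" where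
  "dg m = (\<Sum>x\<in>Poly_Mapping.keys m. Poly_Mapping.lookup m x)"

lemma dg_superset: "finite A \<Longrightarrow> Poly_Mapping.keys m \<subseteq> A \<Longrightarrow> dg m = (\<Sum>x\<in>A. Poly_Mapping.lookup m x)"
  unfolding dg_def by (rule sum.mono_neutral_left) (auto simp: in_keys_iff)

lemma dg_add: "dg (a + b) = dg a + dg b"
proof -
  let ?A = "Poly_Mapping.keys a \<union> Poly_Mapping.keys b"
  have "dg (a + b) = (\<Sum>x\<in>?A. Poly_Mapping.lookup (a + b) x)"
    by (rule dg_superset) (auto dest: set_mp[OF keys_add])
  also have "\<dots> = (\<Sum>x\<in>?A. Poly_Mapping.lookup a x) + (\<Sum>x\<in>?A. Poly_Mapping.lookup b x)"
    by (simp add: lookup_add sum.distrib)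
  also have "\<dots> = dg a + dg b"
    using dg_superset[of ?A a] dg_superset[of ?A b] by auto
  finally show ?thesis .
qed

lemma dg_single[simp]: "dg (Poly_Mapping.single x c) = c"
  by (simp add: dg_def)

lemma dg_zero[simp]: "dg 0 = 0"
  by (simp add: dg_def)

lemma dg_eq_0: "dg m = 0 \<longleftrightarrow> m = 0"
  unfolding dg_def by (auto simp: in_keys_iff intro!: poly_mapping_eqI)

definition ind :: "'v set \<Rightarrow> ('v \<Rightarrow>\<^sub>0 nat)" where
  "ind S = (\<Sum>e\<in>S. Poly_Mapping.single e 1)"

lemma lookup_ind: "finite S \<Longrightarrow> Poly_Mapping.lookup (ind S) x = (if x \<in> S then 1 else 0)"
  unfolding ind_def by (simp add: lookup_sum lookup_single when_def)

lemma keys_ind: "finite S \<Longrightarrow> Poly_Mapping.keys (ind S) = S"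
  by (auto simp: in_keys_iff lookup_ind split: if_splits)

lemma dg_ind: "finite S \<Longrightarrow> dg (ind S) = card S"
  unfolding dg_def by (simp add: keys_ind lookup_ind)

lemma ind_inj: "finite S \<Longrightarrow> finite T \<Longrightarrow> ind S = ind T \<Longrightarrow> S = T"
  by (metis keys_ind)

lemma prod_pvar: "finite S \<Longrightarrow> (\<Prod>e\<in>S. pvar e :: ('v \<Rightarrow>\<^sub>0 nat) \<Rightarrow>\<^sub>0 'a::comm_ring_1) = Poly_Mapping.single (ind S) 1"
proof (induction S rule: finite_induct)
  case empty
  then show ?case by (simp add: ind_def)
next
  case (insert x F)
  then show ?case by (simp add: ind_def pvar_def mult_single)
qed

lemma ind_minus: "finite S \<Longrightarrow> e \<in> S \<Longrightarrow> ind S - Poly_Mapping.single e 1 = ind (S - {e})"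
  by (rule poly_mapping_eqI) (auto simp: lookup_minus lookup_ind lookup_single when_def)

definition goodp :: "nat \<Rightarrow> 'v set \<Rightarrow> (('v \<Rightarrow>\<^sub>0 nat) \<Rightarrow>\<^sub>0 'a::zero) \<Rightarrow> bool" where
  "goodp d A p \<longleftrightarrow> (\<forall>m\<in>Poly_Mapping.keys p. Poly_Mapping.keys m \<subseteq> A \<and> dg m = d)"

lemma goodp_0[simp]: "goodp d A 0"
  by (simp add: goodp_def)

lemma goodp_add: "goodp d A p \<Longrightarrow> goodp d A q \<Longrightarrow> goodp d A (p + q)"
  unfolding goodp_def by (meson UnE keys_add subsetD)

lemma goodp_uminus: "goodp d A (p::('v \<Rightarrow>\<^sub>0 nat) \<Rightarrow>\<^sub>0 'a::ab_group_add) \<Longrightarrow> goodp d A (- p)"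
  unfolding goodp_def by (simp add: in_keys_iff)

lemma goodp_diff: "goodp d A (p::('v \<Rightarrow>\<^sub>0 nat) \<Rightarrow>\<^sub>0 'a::ab_group_add) \<Longrightarrow> goodp d A q \<Longrightarrow> goodp d A (p - q)"
  unfolding goodp_def by (meson UnE keys_diff subsetD)

lemma keys_sc: "Poly_Mapping.keys (sc c p) \<subseteq> Poly_Mapping.keys p"
proof
  fix x assume "x \<in> Poly_Mapping.keys (sc c p)"
  then have "c * Poly_Mapping.lookup p x \<noteq> 0" by (metis lookup_sc in_keys_iff)
  then show "x \<in> Poly_Mapping.keys p" by (metis in_keys_iff mult_zero_right)
qed

lemma goodp_sc: "goodp d A p \<Longrightarrow> goodp d A (sc c p)"
  unfolding goodp_def using keys_sc by blast

lemma goodp_sum: "(\<And>i. i \<in> I \<Longrightarrow> goodp d A (f i)) \<Longrightarrow> goodp d A (sum f I)"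
proof (induction I rule: infinite_finite_induct)
  case (insert x F)
  then show ?case by (simp add: goodp_add)
qed simp_all

lemma goodp_single: "Poly_Mapping.keys m \<subseteq> A \<Longrightarrow> dg m = d \<Longrightarrow> goodp d A (Poly_Mapping.single m c)"
  unfolding goodp_def by auto

lemma keys_add_nat: "Poly_Mapping.keys (a + b :: 'v \<Rightarrow>\<^sub>0 nat) = Poly_Mapping.keys a \<union> Poly_Mapping.keys b"
  by (auto simp: in_keys_iff lookup_add)

lemma goodp_mult: "goodp d1 A p \<Longrightarrow> goodp d2 A (q :: ('v \<Rightarrow>\<^sub>0 nat) \<Rightarrow>\<^sub>0 'a::comm_ring_1) \<Longrightarrow> goodp (d1 + d2) A (p * q)"
  unfolding goodp_def
proof (intro ballI)
  fix m assume a1: "\<forall>m\<in>Poly_Mapping.keys p. Poly_Mapping.keys m \<subseteq> A \<and> dg m = d1"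
    and a2: "\<forall>m\<in>Poly_Mapping.keys q. Poly_Mapping.keys m \<subseteq> A \<and> dg m = d2"
    and m: "m \<in> Poly_Mapping.keys (p * q)"
  from m keys_mult[of p q] obtain a b where "m = a + b" "a \<in> Poly_Mapping.keys p" "b \<in> Poly_Mapping.keys q"
    by blast
  with a1 a2 show "Poly_Mapping.keys m \<subseteq> A \<and> dg m = d1 + d2"
    by (simp add: keys_add_nat dg_add)
qed

lemma goodp_one: "goodp 0 A (1 :: ('v \<Rightarrow>\<^sub>0 nat) \<Rightarrow>\<^sub>0 'a::comm_ring_1)"
  unfolding goodp_def by simp

lemma goodp_prod: "finite I \<Longrightarrow> (\<And>i. i \<in> I \<Longrightarrow> goodp 1 A (f i)) \<Longrightarrow> goodp (card I) A (prod f I :: ('v \<Rightarrow>\<^sub>0 nat) \<Rightarrow>\<^sub>0 'a::comm_ring_1)"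
proof (induction I rule: finite_induct)
  case empty
  then show ?case by (simp add: goodp_one)
next
  case (insert x F)
  then show ?case using goodp_mult[of 1 A "f x" "card F" "prod f F"] by (simp add: One_nat_def)
qed

lemma goodp_span: "(\<And>x. x \<in> B \<Longrightarrow> goodp d A x) \<Longrightarrow> p \<in> VS.span B \<Longrightarrow> goodp d A p"
proof -
  assume B: "\<And>x. x \<in> B \<Longrightarrow> goodp d A x" and p: "p \<in> VS.span B"
  have "VS.span B \<subseteq> {p. goodp d A p}"
    by (rule VS.span_minimal) (auto simp: VS.subspace_def B goodp_add goodp_sc)
  with p show ?thesis by auto
qed

lemma finite_E: "finite (tiered_edges n t)"
proof -
  have "tiered_edges n t \<subseteq> {1..n} \<times> {1..n}" by (auto simp: tiered_edges_def)
  then show ?thesis by (rule finite_subset) simp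
qed

lemma E_mem: "e \<in> tiered_edges n t \<Longrightarrow> fst e < snd e \<and> fst e \<in> {1..n} \<and> snd e \<in> {1..n}"
  by (auto simp: tiered_edges_def)

definition cc :: "nat \<Rightarrow> nat \<times> nat \<Rightarrow> 'a::comm_ring_1" where
  "cc v e = (if fst e = v then 1 else if snd e = v then -1 else 0)"

lemma Xpoly_eq: "Xpoly n t v = (\<Sum>e\<in>tiered_edges n t. Poly_Mapping.single (Poly_Mapping.single e 1) (cc v e))"
  unfolding Xpoly_def pvar_def cc_def by (rule sum.cong) (auto simp: single_uminus)

lemma goodp_Xpoly: "goodp 1 (tiered_edges n t) (Xpoly n t v)"
  unfolding Xpoly_eq by (rule goodp_sum) (rule goodp_single, auto)

lemma goodp_Xprod: "goodp k (tiered_edges n t) (\<Prod>j<k. Xpoly n t (f j))"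
proof -
  have "goodp (card {..<k}) (tiered_edges n t) (\<Prod>j<k. Xpoly n t (f j))"
    by (rule goodp_prod) (auto intro: goodp_Xpoly)
  then show ?thesis by simp
qed

lemma L1:
  assumes S: "S \<subseteq> tiered_edges n t"
  shows "Poly_Mapping.lookup (P * Xpoly n t v) (ind S) = (\<Sum>e\<in>S. cc v e * Poly_Mapping.lookup P (ind (S - {e})))"
proof -
  have fS: "finite S" using S finite_E finite_subset by blast
  have "P * Xpoly n t v = (\<Sum>e\<in>tiered_edges n t. Poly_Mapping.single (Poly_Mapping.single e 1) (cc v e) * P)"
    unfolding Xpoly_eq by (simp add: sum_distrib_left mult.commute)
  then have "Poly_Mapping.lookup (P * Xpoly n t v) (ind S)
     = (\<Sum>e\<in>tiered_edges n t. Poly_Mapping.lookup (Poly_Mapping.single (Poly_Mapping.single e 1) (cc v e) * P) (ind S))"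
    by (simp only: lookup_sum)
  also have "\<dots> = (\<Sum>e\<in>tiered_edges n t. if 0 < Poly_Mapping.lookup (ind S) e then cc v e * Poly_Mapping.lookup P (ind S - Poly_Mapping.single e 1) else 0)"
    by (simp only: lookup_var_mult)
  also have "\<dots> = (\<Sum>e\<in>tiered_edges n t. if e \<in> S then cc v e * Poly_Mapping.lookup P (ind (S - {e})) else 0)"
    by (rule sum.cong) (auto simp: lookup_ind ind_minus fS)
  also have "\<dots> = (\<Sum>e\<in>tiered_edges n t \<inter> S. cc v e * Poly_Mapping.lookup P (ind (S - {e})))"
    by (rule sum.inter_restrict[symmetric]) (rule finite_E)
  also have "tiered_edges n t \<inter> S = S" using S by blast
  finally show ?thesis .
qed

lemma Dpvar:
  fixes Q R :: "(nat \<Rightarrow>\<^sub>0 nat) \<Rightarrow>\<^sub>0 'a::field"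
  assumes R: "\<And>H. Poly_Mapping.lookup R H = of_nat (Poly_Mapping.lookup H v + 1) * Poly_Mapping.lookup Q (H + Poly_Mapping.single v 1)"
  shows "of_nat (Poly_Mapping.lookup G v + 1) * Poly_Mapping.lookup (pvar a * Q) (G + Poly_Mapping.single v 1)
     = (if a = v then Poly_Mapping.lookup Q G else 0) + Poly_Mapping.lookup (pvar a * R) G"
proof (cases "a = v")
  case True
  have e1: "G + Poly_Mapping.single v 1 - Poly_Mapping.single v 1 = G"
    by (rule poly_mapping_eqI) (simp add: lookup_add lookup_minus)
  show ?thesis
  proof (cases "0 < Poly_Mapping.lookup G v")
    case True
    have e2: "G - Poly_Mapping.single v 1 + Poly_Mapping.single v 1 = G"
      using True by (intro poly_mapping_eqI) (auto simp: lookup_add lookup_minus lookup_single when_def)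
    have e3: "Poly_Mapping.lookup (G - Poly_Mapping.single v 1) v + 1 = Poly_Mapping.lookup G v"
      using True by (simp add: lookup_minus)
    have RG: "Poly_Mapping.lookup R (G - Poly_Mapping.single v 1) = of_nat (Poly_Mapping.lookup G v) * Poly_Mapping.lookup Q G"
      by (simp only: R e2 e3)
    have l1: "Poly_Mapping.lookup (pvar a * Q) (G + Poly_Mapping.single v 1) = Poly_Mapping.lookup Q G"
      unfolding pvar_def lookup_var_mult using \<open>a = v\<close> by (simp add: lookup_add e1)
    have l2: "Poly_Mapping.lookup (pvar a * R) G = Poly_Mapping.lookup R (G - Poly_Mapping.single v 1)"
      unfolding pvar_def lookup_var_mult using \<open>a = v\<close> True by simp
    show ?thesis using \<open>a = v\<close> unfolding l1 l2 RG
      by (simp add: algebra_simps)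
  next
    case False
    then show ?thesis using \<open>a = v\<close> unfolding pvar_def lookup_var_mult
      by (simp add: lookup_add e1)
  qed
next
  case False
  show ?thesis
  proof (cases "0 < Poly_Mapping.lookup G a")
    case True
    have e2: "G - Poly_Mapping.single a 1 + Poly_Mapping.single v 1 = G + Poly_Mapping.single v 1 - Poly_Mapping.single a 1"
      using True False by (intro poly_mapping_eqI) (auto simp: lookup_add lookup_minus lookup_single when_def)
    have e3: "Poly_Mapping.lookup (G - Poly_Mapping.single a 1) v = Poly_Mapping.lookup G v"
      using False by (simp add: lookup_minus lookup_single when_def)
    show ?thesis using True False unfolding pvar_def lookup_var_mult
      by (simp add: lookup_add R e2 e3 lookup_single when_def)
  next
    case F2: False
    then show ?thesis using False unfolding pvar_def lookup_var_mult
      by (simp add: lookup_add lookup_single when_def)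
  qed
qed

lemma Zpoly_insert: "finite S \<Longrightarrow> e \<notin> S \<Longrightarrow> Zpoly (insert e S) = (pvar (fst e) - pvar (snd e)) * Zpoly S"
  unfolding Zpoly_def by simp

lemma L2:
  assumes "finite S" "\<forall>e\<in>S. fst e \<noteq> snd e"
  shows "of_nat (Poly_Mapping.lookup G v + 1) * Poly_Mapping.lookup (Zpoly S :: (nat \<Rightarrow>\<^sub>0 nat) \<Rightarrow>\<^sub>0 'a::field) (G + Poly_Mapping.single v 1)
     = (\<Sum>e\<in>S. cc v e * Poly_Mapping.lookup (Zpoly (S - {e}) :: (nat \<Rightarrow>\<^sub>0 nat) \<Rightarrow>\<^sub>0 'a) G)"
  using assms
proof (induction S arbitrary: G rule: finite_induct)
  case empty
  have "Poly_Mapping.lookup (G + Poly_Mapping.single v 1) v \<noteq> 0"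
    by (simp add: lookup_add)
  then have "G + Poly_Mapping.single v 1 \<noteq> 0" by auto
  then show ?case by (simp add: Zpoly_def lookup_one)
next
  case (insert e0 S0)
  define a where "a = fst e0"
  define b where "b = snd e0"
  have ab: "a \<noteq> b" using insert.prems by (simp add: a_def b_def)
  have pS0: "\<forall>e\<in>S0. fst e \<noteq> snd e" using insert.prems by simp
  define Q :: "(nat \<Rightarrow>\<^sub>0 nat) \<Rightarrow>\<^sub>0 'a" where "Q = Zpoly S0"
  define R :: "(nat \<Rightarrow>\<^sub>0 nat) \<Rightarrow>\<^sub>0 'a" where "R = (\<Sum>e\<in>S0. sc (cc v e) (Zpoly (S0 - {e})))"
  have R: "Poly_Mapping.lookup R H = of_nat (Poly_Mapping.lookup H v + 1) * Poly_Mapping.lookup Q (H + Poly_Mapping.single v 1)" for H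
  proof -
    have "Poly_Mapping.lookup R H = (\<Sum>e\<in>S0. cc v e * Poly_Mapping.lookup (Zpoly (S0 - {e}) :: (nat \<Rightarrow>\<^sub>0 nat) \<Rightarrow>\<^sub>0 'a) H)"
      by (simp add: R_def lookup_sum)
    also have "\<dots> = of_nat (Poly_Mapping.lookup H v + 1) * Poly_Mapping.lookup Q (H + Poly_Mapping.single v 1)"
      unfolding Q_def by (rule insert.IH[OF pS0, symmetric])
    finally show ?thesis .
  qed
  have Za: "of_nat (Poly_Mapping.lookup G v + 1) * Poly_Mapping.lookup (pvar a * Q) (G + Poly_Mapping.single v 1)
     = (if a = v then Poly_Mapping.lookup Q G else 0) + Poly_Mapping.lookup (pvar a * R) G"
    by (rule Dpvar[OF R])
  have Zb: "of_nat (Poly_Mapping.lookup G v + 1) * Poly_Mapping.lookup (pvar b * Q) (G + Poly_Mapping.single v 1)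
     = (if b = v then Poly_Mapping.lookup Q G else 0) + Poly_Mapping.lookup (pvar b * R) G"
    by (rule Dpvar[OF R])
  have ZS: "Zpoly (insert e0 S0) = (pvar a - pvar b) * Q"
    using insert.hyps by (simp add: Zpoly_insert a_def b_def Q_def)
  have c0: "cc v e0 = (if a = v then 1 else 0) - (if b = v then (1::'a) else 0)"
    using ab by (auto simp: cc_def a_def b_def)
  have d1: "Poly_Mapping.lookup ((pvar a - pvar b) * Q) H = Poly_Mapping.lookup (pvar a * Q) H - Poly_Mapping.lookup (pvar b * Q) H" for H
    by (simp only: left_diff_distrib lookup_minus)
  have d2: "Poly_Mapping.lookup ((pvar a - pvar b) * R) H = Poly_Mapping.lookup (pvar a * R) H - Poly_Mapping.lookup (pvar b * R) H" for H
    by (simp only: left_diff_distrib lookup_minus)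
  have "of_nat (Poly_Mapping.lookup G v + 1) * Poly_Mapping.lookup (Zpoly (insert e0 S0) :: (nat \<Rightarrow>\<^sub>0 nat) \<Rightarrow>\<^sub>0 'a) (G + Poly_Mapping.single v 1)
     = of_nat (Poly_Mapping.lookup G v + 1) * Poly_Mapping.lookup (pvar a * Q) (G + Poly_Mapping.single v 1)
       - of_nat (Poly_Mapping.lookup G v + 1) * Poly_Mapping.lookup (pvar b * Q) (G + Poly_Mapping.single v 1)"
    unfolding ZS d1 by (simp only: right_diff_distrib)
  also have "\<dots> = cc v e0 * Poly_Mapping.lookup Q G + Poly_Mapping.lookup ((pvar a - pvar b) * R) G"
    unfolding Za Zb d2 c0 by (simp add: algebra_simps)
  also have "(pvar a - pvar b) * R = (\<Sum>e\<in>S0. sc (cc v e) (Zpoly (insert e0 S0 - {e})))"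
  proof -
    have "(pvar a - pvar b) * R = (\<Sum>e\<in>S0. sc (cc v e) ((pvar a - pvar b) * Zpoly (S0 - {e})))"
      unfolding R_def sum_distrib_left sc_eq by (simp only: mult.left_commute)
    also have "\<dots> = (\<Sum>e\<in>S0. sc (cc v e) (Zpoly (insert e0 S0 - {e})))"
    proof (rule sum.cong)
      fix e assume "e \<in> S0"
      then have "insert e0 S0 - {e} = insert e0 (S0 - {e})" using insert.hyps by auto
      then show "sc (cc v e) ((pvar a - pvar b) * Zpoly (S0 - {e})) = sc (cc v e) (Zpoly (insert e0 S0 - {e}))"
        using insert.hyps by (simp add: Zpoly_insert a_def b_def)
    qed simp
    finally show ?thesis .
  qed
  also have "cc v e0 * Poly_Mapping.lookup Q G + Poly_Mapping.lookup (\<Sum>e\<in>S0. sc (cc v e) (Zpoly (insert e0 S0 - {e})) :: (nat \<Rightarrow>\<^sub>0 nat) \<Rightarrow>\<^sub>0 'a) G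
     = (\<Sum>e\<in>insert e0 S0. cc v e * Poly_Mapping.lookup (Zpoly (insert e0 S0 - {e}) :: (nat \<Rightarrow>\<^sub>0 nat) \<Rightarrow>\<^sub>0 'a) G)"
  proof -
    have "insert e0 S0 - {e0} = S0" using insert.hyps by auto
    then show ?thesis using insert.hyps by (simp add: Q_def lookup_sum)
  qed
  finally show ?case .
qed

definition M :: "nat \<Rightarrow> (nat \<Rightarrow> nat) \<Rightarrow> (nat \<Rightarrow>\<^sub>0 nat)" where
  "M k f = (\<Sum>j<k. Poly_Mapping.single (f j) 1)"

definition fm :: "(nat \<Rightarrow>\<^sub>0 nat) \<Rightarrow> nat" where
  "fm G = (\<Prod>x\<in>Poly_Mapping.keys G. fact (Poly_Mapping.lookup G x))"

lemma fm_superset: "finite A \<Longrightarrow> Poly_Mapping.keys G \<subseteq> A \<Longrightarrow> fm G = (\<Prod>x\<in>A. fact (Poly_Mapping.lookup G x))"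
  unfolding fm_def by (rule prod.mono_neutral_left) (auto simp: in_keys_iff)

lemma fm_pos: "fm G > 0"
  unfolding fm_def by (simp add: prod_pos)

lemma fm_add1: "fm (G + Poly_Mapping.single v 1) = fm G * (Poly_Mapping.lookup G v + 1)"
proof -
  let ?A = "insert v (Poly_Mapping.keys G)"
  have k: "Poly_Mapping.keys (G + Poly_Mapping.single v 1) \<subseteq> ?A"
    using keys_add[of G "Poly_Mapping.single v 1"] by auto
  have "fm (G + Poly_Mapping.single v 1) = (\<Prod>x\<in>?A. fact (Poly_Mapping.lookup (G + Poly_Mapping.single v 1) x))"
    by (rule fm_superset[OF _ k]) simp
  also have "\<dots> = fact (Poly_Mapping.lookup G v + 1) * (\<Prod>x\<in>?A - {v}. fact (Poly_Mapping.lookup (G + Poly_Mapping.single v 1) x))"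
    by (subst prod.remove[of _ v]) (auto simp: lookup_add)
  also have "(\<Prod>x\<in>?A - {v}. fact (Poly_Mapping.lookup (G + Poly_Mapping.single v 1) x)) = (\<Prod>x\<in>?A - {v}. fact (Poly_Mapping.lookup G x))"
    by (rule prod.cong) (auto simp: lookup_add lookup_single when_def)
  also have "fm G = fact (Poly_Mapping.lookup G v) * (\<Prod>x\<in>?A - {v}. fact (Poly_Mapping.lookup G x))"
    by (subst fm_superset[of ?A]) (auto simp: prod.insert_remove)
  moreover have "fact (Poly_Mapping.lookup G v + 1) = fact (Poly_Mapping.lookup G v) * (Poly_Mapping.lookup G v + 1)"
    by (simp add: One_nat_def)
  ultimately show ?thesis by simp
qed

lemma M_Suc: "M (Suc k) f = M k f + Poly_Mapping.single (f k) 1"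
  by (simp add: M_def)

lemma star:
  assumes "S \<subseteq> tiered_edges n t" "card S = k"
  shows "Poly_Mapping.lookup (\<Prod>j<k. Xpoly n t (f j) :: ((nat \<times> nat) \<Rightarrow>\<^sub>0 nat) \<Rightarrow>\<^sub>0 'a::field) (ind S)
     = of_nat (fm (M k f)) * Poly_Mapping.lookup (Zpoly S :: (nat \<Rightarrow>\<^sub>0 nat) \<Rightarrow>\<^sub>0 'a) (M k f)"
  using assms
proof (induction k arbitrary: S)
  case 0
  have "finite S" using 0 finite_E finite_subset by blast
  with 0 have "S = {}" by simp
  then show ?case by (simp add: ind_def M_def fm_def Zpoly_def)
next
  case (Suc k)
  have fS: "finite S" using Suc.prems finite_E finite_subset by blast
  let ?G = "M k f"
  let ?v = "f k"
  have "Poly_Mapping.lookup (\<Prod>j<Suc k. Xpoly n t (f j) :: ((nat \<times> nat) \<Rightarrow>\<^sub>0 nat) \<Rightarrow>\<^sub>0 'a) (ind S)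
     = (\<Sum>e\<in>S. cc ?v e * Poly_Mapping.lookup (\<Prod>j<k. Xpoly n t (f j) :: ((nat \<times> nat) \<Rightarrow>\<^sub>0 nat) \<Rightarrow>\<^sub>0 'a) (ind (S - {e})))"
    using L1[OF Suc.prems(1)] by simp
  also have "\<dots> = (\<Sum>e\<in>S. cc ?v e * (of_nat (fm ?G) * Poly_Mapping.lookup (Zpoly (S - {e}) :: (nat \<Rightarrow>\<^sub>0 nat) \<Rightarrow>\<^sub>0 'a) ?G))"
  proof (rule sum.cong)
    fix e assume "e \<in> S"
    then have "S - {e} \<subseteq> tiered_edges n t" "card (S - {e}) = k" using Suc.prems fS by auto
    then show "cc ?v e * Poly_Mapping.lookup (\<Prod>j<k. Xpoly n t (f j) :: ((nat \<times> nat) \<Rightarrow>\<^sub>0 nat) \<Rightarrow>\<^sub>0 'a) (ind (S - {e}))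
      = cc ?v e * (of_nat (fm ?G) * Poly_Mapping.lookup (Zpoly (S - {e}) :: (nat \<Rightarrow>\<^sub>0 nat) \<Rightarrow>\<^sub>0 'a) ?G)"
      using Suc.IH by simp
  qed simp
  also have "\<dots> = of_nat (fm ?G) * (\<Sum>e\<in>S. cc ?v e * Poly_Mapping.lookup (Zpoly (S - {e}) :: (nat \<Rightarrow>\<^sub>0 nat) \<Rightarrow>\<^sub>0 'a) ?G)"
    by (simp add: sum_distrib_left algebra_simps)
  also have "(\<Sum>e\<in>S. cc ?v e * Poly_Mapping.lookup (Zpoly (S - {e}) :: (nat \<Rightarrow>\<^sub>0 nat) \<Rightarrow>\<^sub>0 'a) ?G)
     = of_nat (Poly_Mapping.lookup ?G ?v + 1) * Poly_Mapping.lookup (Zpoly S :: (nat \<Rightarrow>\<^sub>0 nat) \<Rightarrow>\<^sub>0 'a) (?G + Poly_Mapping.single ?v 1)"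
  proof -
    have "\<forall>e\<in>S. fst e \<noteq> snd e" using Suc.prems(1) E_mem by (metis less_irrefl subsetD)
    from L2[OF fS this, of ?G ?v] show ?thesis by (rule sym)
  qed
  finally show ?case by (simp add: M_Suc fm_add1 algebra_simps)
qed

section \<open>Linear algebra\<close>

lemma rank_le:
  fixes col :: "'i \<Rightarrow> ('u \<Rightarrow>\<^sub>0 nat) \<Rightarrow>\<^sub>0 'a::field" and g :: "'i \<Rightarrow> ('v \<Rightarrow>\<^sub>0 nat) \<Rightarrow>\<^sub>0 'a"
    and A :: "'j \<Rightarrow> 'i \<Rightarrow> 'a" and \<mu> :: "'j \<Rightarrow> ('u \<Rightarrow>\<^sub>0 nat)"
  assumes fI: "finite I" and hA: "\<And>i j. i \<in> I \<Longrightarrow> j \<in> J \<Longrightarrow> Poly_Mapping.lookup (col i) (\<mu> j) = A j i"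
  shows "VS.dim ((\<lambda>j. \<Sum>i\<in>I. sc (A j i) (g i)) ` J) \<le> VS.dim (col ` I)"
proof -
  obtain B where B: "B \<subseteq> col ` I" "VS.independent B" "col ` I \<subseteq> VS.span B"
    using VS.maximal_independent_subset[of "col ` I"] by blast
  have fB: "finite B" using B(1) fI finite_subset by blast
  have cB: "card B = VS.dim (col ` I)" using VS.basis_card_eq_dim B by blast
  have "\<forall>i\<in>I. \<exists>u. col i = (\<Sum>b\<in>B. sc (u b) b)"
    using B(3) unfolding VS.span_finite[OF fB] by auto
  then obtain \<beta> where \<beta>: "\<And>i. i \<in> I \<Longrightarrow> col i = (\<Sum>b\<in>B. sc (\<beta> i b) b)" by metis
  have "\<forall>b\<in>B. \<exists>i. i \<in> I \<and> col i = b" using B(1) by auto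
  then obtain l where l: "\<And>b. b \<in> B \<Longrightarrow> l b \<in> I \<and> col (l b) = b" by metis
  define w where "w b = (\<Sum>i\<in>I. sc (\<beta> i b) (g i))" for b
  have Aexp: "A j i = (\<Sum>b\<in>B. \<beta> i b * A j (l b))" if "i \<in> I" "j \<in> J" for i j
  proof -
    have "A j i = Poly_Mapping.lookup (col i) (\<mu> j)" using hA that by simp
    also have "\<dots> = (\<Sum>b\<in>B. \<beta> i b * Poly_Mapping.lookup b (\<mu> j))"
      using \<beta>[OF that(1)] by (simp add: lookup_sum)
    also have "\<dots> = (\<Sum>b\<in>B. \<beta> i b * A j (l b))"
      proof (rule sum.cong)
      fix b assume "b \<in> B"
      then have lb: "l b \<in> I" "col (l b) = b" using l by auto
      show "\<beta> i b * Poly_Mapping.lookup b (\<mu> j) = \<beta> i b * A j (l b)"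
        using hA[OF lb(1) that(2)] lb(2) by simp
    qed simp
    finally show ?thesis .
  qed
  have row: "(\<Sum>i\<in>I. sc (A j i) (g i)) = (\<Sum>b\<in>B. sc (A j (l b)) (w b))" if "j \<in> J" for j
  proof -
    have "(\<Sum>i\<in>I. sc (A j i) (g i)) = (\<Sum>i\<in>I. sc (\<Sum>b\<in>B. \<beta> i b * A j (l b)) (g i))"
      by (rule sum.cong) (use Aexp that in auto)
    also have "\<dots> = (\<Sum>i\<in>I. \<Sum>b\<in>B. sc (A j (l b)) (sc (\<beta> i b) (g i)))"
      by (simp add: VS.scale_sum_left mult.commute)
    also have "\<dots> = (\<Sum>b\<in>B. \<Sum>i\<in>I. sc (A j (l b)) (sc (\<beta> i b) (g i)))"
      by (rule sum.swap)
    also have "\<dots> = (\<Sum>b\<in>B. sc (A j (l b)) (w b))"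
      by (simp add: w_def VS.scale_sum_right)
    finally show ?thesis .
  qed
  have "(\<lambda>j. \<Sum>i\<in>I. sc (A j i) (g i)) ` J \<subseteq> VS.span (w ` B)"
  proof
    fix x assume "x \<in> (\<lambda>j. \<Sum>i\<in>I. sc (A j i) (g i)) ` J"
    then obtain j where j: "j \<in> J" "x = (\<Sum>i\<in>I. sc (A j i) (g i))" by blast
    show "x \<in> VS.span (w ` B)"
      unfolding j(2) row[OF j(1)]
      by (intro VS.span_sum VS.span_scale VS.span_base) auto
  qed
  then have "VS.dim ((\<lambda>j. \<Sum>i\<in>I. sc (A j i) (g i)) ` J) \<le> card (w ` B)"
    using fB by (intro VS.dim_le_card) auto
  also have "\<dots> \<le> card B" using fB by (rule card_image_le)
  finally show ?thesis using cB by simp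
qed

lemma span_disjoint_zero:
  fixes C :: "(('v \<Rightarrow>\<^sub>0 nat) \<Rightarrow>\<^sub>0 'a::field) set"
  assumes C: "VS.independent C" "finite C" and D: "D \<subseteq> C" and B: "B0 \<subseteq> C" and DB: "D \<inter> B0 = {}"
    and x: "x \<in> VS.span D" "x \<in> VS.span B0"
  shows "x = 0"
proof -
  have fD: "finite D" using C(2) D finite_subset by blast
  have fB: "finite B0" using C(2) B finite_subset by blast
  obtain u where u: "x = (\<Sum>d\<in>D. sc (u d) d)" using x(1) unfolding VS.span_finite[OF fD] by blast
  obtain w where w: "x = (\<Sum>b\<in>B0. sc (w b) b)" using x(2) unfolding VS.span_finite[OF fB] by blast
  define h where "h c = (if c \<in> D then u c else - w c)" for c
  have "(\<Sum>c\<in>D \<union> B0. sc (h c) c) = (\<Sum>c\<in>D. sc (h c) c) + (\<Sum>c\<in>B0. sc (h c) c)"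
    by (rule sum.union_disjoint) (use fD fB DB in auto)
  also have "(\<Sum>c\<in>D. sc (h c) c) = x" unfolding u by (rule sum.cong) (auto simp: h_def)
  also have "(\<Sum>c\<in>B0. sc (h c) c) = - x" unfolding w
    by (simp add: h_def VS.scale_minus_left sum_negf[symmetric]) (rule sum.cong, use DB in auto)
  finally have z: "(\<Sum>c\<in>D \<union> B0. sc (h c) c) = 0" by simp
  have "\<forall>d\<in>D. u d = 0"
  proof
    fix d assume "d \<in> D"
    then have "h d = 0" using VS.independentD[OF C(1) _ _ z] fD fB D B by auto
    then show "u d = 0" using \<open>d \<in> D\<close> by (simp add: h_def)
  qed
  then show ?thesis unfolding u by simp
qed

lemma rank_nullity:
  fixes \<pi> :: "(('v \<Rightarrow>\<^sub>0 nat) \<Rightarrow>\<^sub>0 'a::field) \<Rightarrow> (('v \<Rightarrow>\<^sub>0 nat) \<Rightarrow>\<^sub>0 'a)"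
  assumes hom: "module_hom sc sc \<pi>" and fT: "finite T"
  shows "VS.dim (VS.span T) = VS.dim (VS.span T \<inter> {x. \<pi> x = 0}) + VS.dim (\<pi> ` VS.span T)"
proof -
  interpret H: module_hom sc sc \<pi> by (rule hom)
  let ?V = "VS.span T"
  let ?K = "?V \<inter> {x. \<pi> x = 0}"
  obtain B0 where B0: "B0 \<subseteq> ?K" "VS.independent B0" "?K \<subseteq> VS.span B0"
    using VS.maximal_independent_subset[of ?K] by blast
  obtain C where C: "B0 \<subseteq> C" "C \<subseteq> ?V" "VS.independent C" "?V \<subseteq> VS.span C"
    using VS.maximal_independent_subset_extend[of B0 ?V] B0 by blast
  have fC: "finite C" using VS.independent_span_bound[OF fT C(3)] C(2) by blast
  have fB0: "finite B0" using fC C(1) finite_subset by blast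
  have dV: "VS.dim ?V = card C" using VS.basis_card_eq_dim[OF C(2) C(4) C(3)] by simp
  have dK: "VS.dim ?K = card B0" using VS.basis_card_eq_dim[OF B0(1) B0(3) B0(2)] by simp
  define D where "D = C - B0"
  have spanC: "VS.span C = ?V"
    using C(2,4) VS.span_minimal[OF C(2)] by auto
  have injD: "\<forall>x\<in>VS.span D. \<pi> x = 0 \<longrightarrow> x = 0"
  proof (intro ballI impI)
    fix x assume x: "x \<in> VS.span D" "\<pi> x = 0"
    have "x \<in> ?V" using x(1) VS.span_mono[of D C] spanC by (auto simp: D_def)
    then have "x \<in> VS.span B0" using x(2) B0(3) by auto
    then show "x = 0" using span_disjoint_zero[OF C(3) fC _ C(1) _ x(1)] by (auto simp: D_def)
  qed
  have inj: "inj_on \<pi> (VS.span D)"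
    using H.inj_on_iff_eq_0[OF VS.subspace_span] injD by blast
  have indD: "VS.independent D" using VS.independent_mono[OF C(3)] by (auto simp: D_def)
  have ind: "VS.independent (\<pi> ` D)" by (rule H.independent_injective_image[OF indD inj])
  have cardD: "card (\<pi> ` D) = card D"
    using inj VS.span_superset[of D] by (intro card_image) (rule inj_on_subset)
  have img: "\<pi> ` ?V = VS.span (\<pi> ` D)"
  proof -
    have "\<pi> ` ?V = VS.span (\<pi> ` C)" using H.span_image spanC by simp
    also have "\<dots> = VS.span (\<pi> ` D)"
    proof (subst VS.span_eq, intro conjI)
      show "\<pi> ` C \<subseteq> VS.span (\<pi> ` D)"
      proof
        fix y assume "y \<in> \<pi> ` C"
        then obtain c where c: "c \<in> C" "y = \<pi> c" by blast
        show "y \<in> VS.span (\<pi> ` D)"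
        proof (cases "c \<in> B0")
          case True
          then have "y = 0" using c B0(1) by auto
          then show ?thesis by (simp add: VS.span_zero)
        next
          case False
          then show ?thesis using c by (intro VS.span_base) (auto simp: D_def)
        qed
      qed
      show "\<pi> ` D \<subseteq> VS.span (\<pi> ` C)" by (auto simp: D_def intro!: VS.span_base)
    qed
    finally show ?thesis .
  qed
  have "VS.dim (\<pi> ` ?V) = card D"
    unfolding img VS.dim_span using VS.dim_eq_card_independent[OF ind] cardD by simp
  moreover have "card C = card B0 + card D"
    unfolding D_def using card_Diff_subset[OF fB0 C(1)] fC C(1) card_mono[OF fC C(1)] by simp
  ultimately show ?thesis using dV dK by simp
qed

definition Sl :: "nat \<Rightarrow> (nat \<Rightarrow> nat) \<Rightarrow> nat \<Rightarrow> (nat \<times> nat) set set" where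
  "Sl n t k = {H. slim n t H \<and> card H = k}"

lemma slim_sub: "slim n t H \<Longrightarrow> H \<subseteq> tiered_edges n t"
  by (simp add: slim_def)

lemma slim_finite: "slim n t H \<Longrightarrow> finite H"
  by (rule finite_subset[OF slim_sub finite_E])

lemma finite_slims: "finite {H. slim n t H}"
proof -
  have "{H. slim n t H} \<subseteq> Pow (tiered_edges n t)" using slim_sub by blast
  then show ?thesis by (rule finite_subset) (simp add: finite_E)
qed

lemma finite_Sl: "finite (Sl n t k)"
proof -
  have "Sl n t k \<subseteq> {H. slim n t H}" by (auto simp: Sl_def)
  then show ?thesis using finite_slims by (rule finite_subset)
qed

lemma slim_mono: "slim n t S \<Longrightarrow> H \<subseteq> S \<Longrightarrow> slim n t H"
proof -
  assume S: "slim n t S" and HS: "H \<subseteq> S"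
  let ?E = "tiered_edges n t"
  have sub: "(?E - S) \<union> (?E - S)\<inverse> \<subseteq> (?E - H) \<union> (?E - H)\<inverse>" using HS by blast
  have "H \<subseteq> ?E" using S HS by (auto simp: slim_def)
  moreover have "graph_connected {1..n} (?E - H)"
    unfolding graph_connected_def
  proof (intro ballI)
    fix u v assume "u \<in> {1..n}" "v \<in> {1..n}"
    then have "(u, v) \<in> ((?E - S) \<union> (?E - S)\<inverse>)\<^sup>*" using S by (simp add: slim_def graph_connected_def)
    then show "(u, v) \<in> ((?E - H) \<union> (?E - H)\<inverse>)\<^sup>*" using rtrancl_mono[OF sub] by (rule subsetD[rotated])
  qed
  ultimately show "slim n t H" by (simp add: slim_def)
qed

section \<open>The ideal\<close>

lemma ig_0: "0 \<in> ideal_gen G"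
  unfolding ideal_gen_def by (rule CollectI, rule exI[of _ "{}"]) simp

lemma ig_mult: "s \<in> G \<Longrightarrow> r * s \<in> ideal_gen G"
  unfolding ideal_gen_def by (rule CollectI, rule exI[of _ "{s}"], rule exI[of _ "\<lambda>_. r"]) simp

lemma ig_add:
  assumes "p \<in> ideal_gen G" "q \<in> ideal_gen G"
  shows "p + q \<in> ideal_gen G"
proof -
  obtain F1 r1 where 1: "finite F1" "F1 \<subseteq> G" "p = (\<Sum>s\<in>F1. r1 s * s)"
    using assms(1) unfolding ideal_gen_def by blast
  obtain F2 r2 where 2: "finite F2" "F2 \<subseteq> G" "q = (\<Sum>s\<in>F2. r2 s * s)"
    using assms(2) unfolding ideal_gen_def by blast
  define r where "r s = (if s \<in> F1 then r1 s else 0) + (if s \<in> F2 then r2 s else 0)" for s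
  have "(\<Sum>s\<in>F1 \<union> F2. r s * s) = (\<Sum>s\<in>F1 \<union> F2. if s \<in> F1 then r1 s * s else 0) + (\<Sum>s\<in>F1 \<union> F2. if s \<in> F2 then r2 s * s else 0)"
  proof -
    have "(\<Sum>s\<in>F1 \<union> F2. r s * s) = (\<Sum>s\<in>F1 \<union> F2. (if s \<in> F1 then r1 s * s else 0) + (if s \<in> F2 then r2 s * s else 0))"
      by (rule sum.cong) (auto simp: r_def distrib_right)
    then show ?thesis by (simp only: sum.distrib)
  qed
  also have "\<dots> = (\<Sum>s\<in>(F1 \<union> F2) \<inter> F1. r1 s * s) + (\<Sum>s\<in>(F1 \<union> F2) \<inter> F2. r2 s * s)"
    using 1 2 by (simp only: sum.inter_restrict[OF finite_UnI[OF 1(1) 2(1)]])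
  also have "\<dots> = p + q"
  proof -
    have e1: "(F1 \<union> F2) \<inter> F1 = F1" by blast
    have e2: "(F1 \<union> F2) \<inter> F2 = F2" by blast
    show ?thesis unfolding e1 e2 1(3) 2(3) ..
  qed
  finally have calc: "p + q = (\<Sum>s\<in>F1 \<union> F2. r s * s)" by simp
  show ?thesis unfolding ideal_gen_def
    by (rule CollectI, rule exI[of _ "F1 \<union> F2"], rule exI[of _ r]) (use 1 2 calc in simp)
qed

lemma ig_sum: "(\<And>x. x \<in> A \<Longrightarrow> f x \<in> ideal_gen G) \<Longrightarrow> sum f A \<in> ideal_gen G"
proof (induction A rule: infinite_finite_induct)
  case (insert x F)
  then show ?case by (simp add: ig_add)
qed (simp_all add: ig_0)

definition Gens :: "'a itself \<Rightarrow> nat \<Rightarrow> (nat \<Rightarrow> nat) \<Rightarrow> (((nat \<times> nat) \<Rightarrow>\<^sub>0 nat) \<Rightarrow>\<^sub>0 'a::field) set" where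
  "Gens _ n t = {pvar e * pvar e | e. e \<in> tiered_edges n t}
      \<union> {(\<Prod>e\<in>H. pvar e) | H. H \<subseteq> tiered_edges n t \<and> \<not> slim n t H}"

lemma Phi_ideal_eq: "Phi_ideal TYPE('a::field) n t = ideal_gen (Gens TYPE('a) n t)"
  unfolding Phi_ideal_def Gens_def ..

lemma pvar_sq: "pvar e * pvar e = Poly_Mapping.single (Poly_Mapping.single e 1 + Poly_Mapping.single e 1) (1::'a::comm_ring_1)"
  by (simp add: pvar_def mult_single)

lemma Gens_cases:
  assumes "s \<in> Gens TYPE('a::field) n t"
  obtains e where "e \<in> tiered_edges n t" "s = Poly_Mapping.single (Poly_Mapping.single e 1 + Poly_Mapping.single e 1) 1"
    | H where "H \<subseteq> tiered_edges n t" "\<not> slim n t H" "finite H" "s = Poly_Mapping.single (ind H) 1"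
proof -
  have "s \<in> {pvar e * pvar e | e. e \<in> tiered_edges n t} \<or> s \<in> {(\<Prod>e\<in>H. pvar e) | H. H \<subseteq> tiered_edges n t \<and> \<not> slim n t H}"
    using assms unfolding Gens_def by (rule UnE) simp_all
  then consider (a) e where "e \<in> tiered_edges n t" "s = pvar e * pvar e"
    | (b) H where "H \<subseteq> tiered_edges n t" "\<not> slim n t H" "s = (\<Prod>e\<in>H. pvar e)"
    by (elim disjE CollectE exE conjE) simp_all
  then show thesis
  proof cases
    case a
    then show thesis using that(1) by (simp add: pvar_sq)
  next
    case b
    have fH: "finite H" using b(1) finite_E finite_subset by blast
    then show thesis using that(2)[OF b(1,2) fH] b(3) prod_pvar[OF fH] by simp
  qed
qed

lemma lookup_mult_single_not:
  assumes "\<not> (\<exists>a. x = a + m)"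
  shows "Poly_Mapping.lookup (r * Poly_Mapping.single m (1::'a::comm_ring_1)) x = 0"
proof -
  have "x \<notin> Poly_Mapping.keys (r * Poly_Mapping.single m 1)"
  proof
    assume "x \<in> Poly_Mapping.keys (r * Poly_Mapping.single m 1)"
    then have "x \<in> {a + b |a b. a \<in> Poly_Mapping.keys r \<and> b \<in> Poly_Mapping.keys (Poly_Mapping.single m (1::'a))}"
      using keys_mult[of r "Poly_Mapping.single m (1::'a)"] by blast
    then show False using assms by simp
  qed
  then show ?thesis by (simp add: in_keys_iff)
qed

lemma C1a:
  assumes p: "p \<in> Phi_ideal TYPE('a::field) n t" and S: "S \<in> Sl n t k"
  shows "Poly_Mapping.lookup p (ind S) = 0"
proof -
  obtain F r where F: "finite F" "F \<subseteq> Gens TYPE('a) n t" "p = (\<Sum>s\<in>F. r s * s)"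
    using p unfolding Phi_ideal_eq ideal_gen_def by blast
  have fS: "finite S" and slS: "slim n t S" using S slim_finite by (auto simp: Sl_def)
  have "Poly_Mapping.lookup (r s * s) (ind S) = 0" if s: "s \<in> F" for s
  proof -
    from s F(2) have "s \<in> Gens TYPE('a) n t" by blast
    then show ?thesis
    proof (cases rule: Gens_cases)
      case (1 e)
      have "\<not> (\<exists>a. ind S = a + (Poly_Mapping.single e 1 + Poly_Mapping.single e 1))"
      proof
        assume "\<exists>a. ind S = a + (Poly_Mapping.single e 1 + Poly_Mapping.single e 1)"
        then obtain a where "ind S = a + (Poly_Mapping.single e 1 + Poly_Mapping.single e 1)" by blast
        then have "Poly_Mapping.lookup (ind S) e = Poly_Mapping.lookup a e + 2"
          by (simp add: lookup_add)
        then show False using lookup_ind[OF fS, of e] by (auto split: if_splits)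
      qed
      then show ?thesis using 1 by (simp add: lookup_mult_single_not)
    next
      case (2 H)
      have "\<not> (\<exists>a. ind S = a + ind H)"
      proof
        assume "\<exists>a. ind S = a + ind H"
        then obtain a where a: "ind S = a + ind H" by blast
        have "H \<subseteq> S"
        proof
          fix x assume "x \<in> H"
          then have "Poly_Mapping.lookup (ind S) x \<noteq> 0"
            using a 2(3) by (simp add: lookup_add lookup_ind)
          then show "x \<in> S" using lookup_ind[OF fS, of x] by (auto split: if_splits)
        qed
        then show False using slim_mono[OF slS] 2(2) by blast
      qed
      then show ?thesis using 2 by (simp add: lookup_mult_single_not)
    qed
  qed
  then show ?thesis using F(3) by (simp add: lookup_sum)
qed

lemma single_in_ideal:
  assumes "Poly_Mapping.keys m \<subseteq> tiered_edges n t" "dg m = k" "\<forall>S\<in>Sl n t k. m \<noteq> ind S"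
  shows "Poly_Mapping.single m c \<in> Phi_ideal TYPE('a::field) n t"
proof -
  have key: "\<exists>a s. s \<in> Gens TYPE('a) n t \<and> Poly_Mapping.single m c = Poly_Mapping.single a c * s"
  proof (cases "\<exists>e. 2 \<le> Poly_Mapping.lookup m e")
    case True
    then obtain e where e: "2 \<le> Poly_Mapping.lookup m e" by blast
    then have "e \<in> Poly_Mapping.keys m" by (simp add: in_keys_iff)
    then have eE: "e \<in> tiered_edges n t" using assms(1) by blast
    let ?g = "Poly_Mapping.single e 1 + Poly_Mapping.single e (1::nat)"
    have m: "m = (m - ?g) + ?g"
      using e by (intro poly_mapping_eqI) (auto simp: lookup_add lookup_minus lookup_single when_def)
    have "pvar e * pvar e \<in> Gens TYPE('a) n t" using eE unfolding Gens_def by blast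
    moreover have "Poly_Mapping.single m c = Poly_Mapping.single (m - ?g) c * (pvar e * pvar e)"
      unfolding pvar_sq mult_single using m by simp
    ultimately show ?thesis by (intro exI conjI)
  next
    case False
    let ?H = "Poly_Mapping.keys m"
    have fH: "finite ?H" by simp
    have mi: "m = ind ?H"
    proof (rule poly_mapping_eqI)
      fix x
      have "\<not> 2 \<le> Poly_Mapping.lookup m x" using False by blast
      then have "Poly_Mapping.lookup m x \<le> 1" by linarith
      show "Poly_Mapping.lookup m x = Poly_Mapping.lookup (ind ?H) x"
      proof (cases "Poly_Mapping.lookup m x = 0")
        case True
        then have "x \<notin> ?H" by (simp add: in_keys_iff)
        then show ?thesis using True by (simp add: lookup_ind[OF fH])
      next
        case False
        then have "x \<in> ?H" by (simp add: in_keys_iff)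
        then show ?thesis using False \<open>Poly_Mapping.lookup m x \<le> 1\<close> by (simp add: lookup_ind[OF fH])
      qed
    qed
    have cH: "card ?H = k" using assms(2) mi dg_ind[OF fH] by simp
    have "\<not> slim n t ?H"
    proof
      assume "slim n t ?H"
      then have "?H \<in> Sl n t k" using cH by (simp add: Sl_def)
      then show False using assms(3) mi by blast
    qed
    then have "(\<Prod>e\<in>?H. pvar e) \<in> Gens TYPE('a) n t" using assms(1) unfolding Gens_def by blast
    moreover have "Poly_Mapping.single m c = Poly_Mapping.single 0 c * (\<Prod>e\<in>?H. pvar e)"
      unfolding prod_pvar[OF fH] mult_single mi[symmetric] by simp
    ultimately show ?thesis by (intro exI conjI)
  qed
  then obtain a s where "s \<in> Gens TYPE('a) n t" "Poly_Mapping.single m c = Poly_Mapping.single a c * s"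
    by blast
  then show ?thesis unfolding Phi_ideal_eq by (simp add: ig_mult)
qed

lemma C1b:
  assumes g: "goodp k (tiered_edges n t) p" and z: "\<forall>S\<in>Sl n t k. Poly_Mapping.lookup p (ind S) = 0"
  shows "p \<in> Phi_ideal TYPE('a::field) n t"
proof -
  have "(\<Sum>m\<in>Poly_Mapping.keys p. Poly_Mapping.single m (Poly_Mapping.lookup p m)) \<in> Phi_ideal TYPE('a) n t"
    unfolding Phi_ideal_eq
  proof (rule ig_sum)
    fix m assume m: "m \<in> Poly_Mapping.keys p"
    have "Poly_Mapping.lookup p m \<noteq> 0" using m by (simp add: in_keys_iff)
    then have "\<forall>S\<in>Sl n t k. m \<noteq> ind S" using z by metis
    then show "Poly_Mapping.single m (Poly_Mapping.lookup p m) \<in> ideal_gen (Gens TYPE('a) n t)"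
    proof -
      have "Poly_Mapping.keys m \<subseteq> tiered_edges n t" "dg m = k" using g m unfolding goodp_def by auto
      from single_in_ideal[OF this \<open>\<forall>S\<in>Sl n t k. m \<noteq> ind S\<close>]
      show ?thesis unfolding Phi_ideal_eq .
    qed
  qed
  then show ?thesis by (simp add: sum_single)
qed

section \<open>Projection onto slim monomials\<close>

definition pi :: "nat \<Rightarrow> (nat \<Rightarrow> nat) \<Rightarrow> nat \<Rightarrow> (((nat \<times> nat) \<Rightarrow>\<^sub>0 nat) \<Rightarrow>\<^sub>0 'a::field) \<Rightarrow> (((nat \<times> nat) \<Rightarrow>\<^sub>0 nat) \<Rightarrow>\<^sub>0 'a)" where
  "pi n t k p = (\<Sum>S\<in>Sl n t k. Poly_Mapping.single (ind S) (Poly_Mapping.lookup p (ind S)))"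

lemma lookup_sum_ind:
  assumes S: "S \<in> Sl n t k"
  shows "Poly_Mapping.lookup (\<Sum>S'\<in>Sl n t k. Poly_Mapping.single (ind S') (h S')) (ind S) = (h S :: 'a::comm_ring_1)"
proof -
  have fS: "finite S" using S slim_finite by (auto simp: Sl_def)
  have "Poly_Mapping.lookup (\<Sum>S'\<in>Sl n t k. Poly_Mapping.single (ind S') (h S')) (ind S)
     = (\<Sum>S'\<in>Sl n t k. if S' = S then h S' else 0)"
    unfolding lookup_sum
  proof (rule sum.cong)
    fix S' assume S': "S' \<in> Sl n t k"
    then have fS': "finite S'" using slim_finite by (auto simp: Sl_def)
    have "ind S' = ind S \<longleftrightarrow> S' = S" using ind_inj[OF fS' fS] by blast
    then show "Poly_Mapping.lookup (Poly_Mapping.single (ind S') (h S')) (ind S) = (if S' = S then h S' else 0)"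
      by (simp add: lookup_single when_def)
  qed simp
  also have "\<dots> = h S" using S by (simp add: sum.delta[OF finite_Sl])
  finally show ?thesis .
qed

lemma lookup_pi: "S \<in> Sl n t k \<Longrightarrow> Poly_Mapping.lookup (pi n t k p) (ind S) = Poly_Mapping.lookup p (ind S)"
  unfolding pi_def by (rule lookup_sum_ind)

lemma pi_zero_iff: "pi n t k p = 0 \<longleftrightarrow> (\<forall>S\<in>Sl n t k. Poly_Mapping.lookup p (ind S) = 0)"
proof
  assume "pi n t k p = 0"
  then show "\<forall>S\<in>Sl n t k. Poly_Mapping.lookup p (ind S) = 0"
    using lookup_pi[of _ n t k p] by simp
next
  assume "\<forall>S\<in>Sl n t k. Poly_Mapping.lookup p (ind S) = 0"
  then show "pi n t k p = 0" unfolding pi_def by simp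
qed

lemma module_sc: "module (sc :: 'a::field \<Rightarrow> (('v \<Rightarrow>\<^sub>0 nat) \<Rightarrow>\<^sub>0 'a) \<Rightarrow> _)"
  by unfold_locales (auto intro!: poly_mapping_eqI simp: lookup_add algebra_simps)

lemma hom_pi: "module_hom sc sc (pi n t k :: _ \<Rightarrow> ((nat \<times> nat) \<Rightarrow>\<^sub>0 nat) \<Rightarrow>\<^sub>0 'a::field)"
  unfolding module_hom_iff
proof (intro conjI allI)
  show "module (sc :: 'a \<Rightarrow> _ \<Rightarrow> ((nat \<times> nat) \<Rightarrow>\<^sub>0 nat) \<Rightarrow>\<^sub>0 'a)" by (rule module_sc)
  show "module (sc :: 'a \<Rightarrow> _ \<Rightarrow> ((nat \<times> nat) \<Rightarrow>\<^sub>0 nat) \<Rightarrow>\<^sub>0 'a)" by (rule module_sc)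
  fix x y :: "((nat \<times> nat) \<Rightarrow>\<^sub>0 nat) \<Rightarrow>\<^sub>0 'a"
  show "pi n t k (x + y) = pi n t k x + pi n t k y"
    unfolding pi_def by (simp add: lookup_add single_add sum.distrib)
next
  fix c :: 'a and x :: "((nat \<times> nat) \<Rightarrow>\<^sub>0 nat) \<Rightarrow>\<^sub>0 'a"
  show "pi n t k (sc c x) = sc c (pi n t k x)"
    unfolding pi_def by (simp add: sc_single VS.scale_sum_right)
qed

definition Fs :: "nat \<Rightarrow> nat \<Rightarrow> (nat \<Rightarrow> nat) set" where
  "Fs n k = {f. \<forall>j<k. f j \<in> {1..n}}"

lemma finite_img_Fs:
  assumes "\<And>f g. (\<forall>j<k. f j = g j) \<Longrightarrow> h f = h g"
  shows "finite (h ` Fs n k)"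
proof -
  have "h ` Fs n k \<subseteq> h ` (PiE {..<k} (\<lambda>_. {1..n}))"
  proof
    fix y assume "y \<in> h ` Fs n k"
    then obtain f where f: "f \<in> Fs n k" "y = h f" by blast
    have "restrict f {..<k} \<in> PiE {..<k} (\<lambda>_. {1..n})" using f(1) by (simp add: Fs_def restrict_PiE_iff)
    moreover have "h (restrict f {..<k}) = h f" by (rule assms) simp
    ultimately show "y \<in> h ` (PiE {..<k} (\<lambda>_. {1..n}))" using f(2) by (metis image_eqI)
  qed
  moreover have "finite (h ` (PiE {..<k} (\<lambda>_. {1..n})))" by (intro finite_imageI finite_PiE) auto
  ultimately show ?thesis by (rule finite_subset)
qed

definition Xp :: "'a itself \<Rightarrow> nat \<Rightarrow> (nat \<Rightarrow> nat) \<Rightarrow> nat \<Rightarrow> (nat \<Rightarrow> nat) \<Rightarrow> (((nat \<times> nat) \<Rightarrow>\<^sub>0 nat) \<Rightarrow>\<^sub>0 'a::field)" where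
  "Xp _ n t k f = (\<Prod>j<k. Xpoly n t (f j))"

lemma C_gens_eq: "C_gens TYPE('a::field) n t k = Xp TYPE('a) n t k ` Fs n k"
  unfolding C_gens_def Xp_def Fs_def by auto

lemma finite_C_gens: "finite (C_gens TYPE('a::field) n t k)"
  unfolding C_gens_eq by (rule finite_img_Fs) (simp add: Xp_def)

definition Mon :: "nat \<Rightarrow> nat \<Rightarrow> (nat \<Rightarrow>\<^sub>0 nat) set" where
  "Mon n k = (\<lambda>f. M k f) ` Fs n k"

lemma finite_Mon: "finite (Mon n k)"
  unfolding Mon_def by (rule finite_img_Fs) (simp add: M_def)

lemma realize:
  "Poly_Mapping.keys G \<subseteq> {1..n} \<Longrightarrow> dg G = k \<Longrightarrow> \<exists>f. (\<forall>j<k. f j \<in> {1..n}) \<and> M k f = G"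
proof (induction k arbitrary: G)
  case 0
  then have "G = 0" using dg_eq_0 by blast
  then show ?case by (simp add: M_def)
next
  case (Suc k)
  then have "G \<noteq> 0" by auto
  then obtain v where v: "v \<in> Poly_Mapping.keys G" by (metis keys_eq_empty ex_in_conv)
  then have vp: "0 < Poly_Mapping.lookup G v" by (simp add: in_keys_iff)
  define G' where "G' = G - Poly_Mapping.single v 1"
  have GG: "G = G' + Poly_Mapping.single v 1"
    using vp unfolding G'_def by (intro poly_mapping_eqI) (auto simp: lookup_add lookup_minus lookup_single when_def)
  have "dg G' = k" using Suc.prems(2) GG dg_add[of G' "Poly_Mapping.single v 1"] by simp
  moreover have "Poly_Mapping.keys G' \<subseteq> {1..n}"
  proof
    fix x assume "x \<in> Poly_Mapping.keys G'"
    then have "Poly_Mapping.lookup G' x \<noteq> 0" by (simp add: in_keys_iff)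
    then have "Poly_Mapping.lookup G x \<noteq> 0" unfolding G'_def by (simp add: lookup_minus)
    then have "x \<in> Poly_Mapping.keys G" by (simp add: in_keys_iff)
    then show "x \<in> {1..n}" using Suc.prems(1) by blast
  qed
  ultimately obtain f where f: "\<forall>j<k. f j \<in> {1..n}" "M k f = G'" using Suc.IH by blast
  define f' where "f' = f(k := v)"
  have "M k f' = M k f" unfolding M_def f'_def by (rule sum.cong) auto
  then have "M (Suc k) f' = G" using f(2) GG by (simp add: M_Suc f'_def)
  moreover have "\<forall>j<Suc k. f' j \<in> {1..n}" using f(1) v Suc.prems(1) by (auto simp: f'_def less_Suc_eq)
  ultimately show ?case by blast
qed

lemma in_Mon: "Poly_Mapping.keys G \<subseteq> {1..n} \<Longrightarrow> dg G = k \<Longrightarrow> G \<in> Mon n k"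
proof -
  assume "Poly_Mapping.keys G \<subseteq> {1..n}" "dg G = k"
  from realize[OF this] obtain f where "\<forall>j<k. f j \<in> {1..n}" "M k f = G" by blast
  then show "G \<in> Mon n k" unfolding Mon_def by (intro image_eqI[of _ _ f]) (simp_all add: Fs_def)
qed

lemma goodp_Zpoly:
  assumes "H \<subseteq> tiered_edges n t"
  shows "goodp (card H) {1..n} (Zpoly H :: (nat \<Rightarrow>\<^sub>0 nat) \<Rightarrow>\<^sub>0 'a::field)"
proof -
  have fH: "finite H" using assms finite_E finite_subset by blast
  show ?thesis unfolding Zpoly_def
  proof (rule goodp_prod[OF fH])
    fix e assume "e \<in> H"
    then have "fst e \<in> {1..n}" "snd e \<in> {1..n}" using assms E_mem by blast+
    then show "goodp 1 {1..n} (pvar (fst e) - pvar (snd e) :: (nat \<Rightarrow>\<^sub>0 nat) \<Rightarrow>\<^sub>0 'a)"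
      unfolding pvar_def by (intro goodp_diff goodp_single) auto
  qed
qed

lemma keys_Zpoly_Mon:
  assumes "S \<in> Sl n t k"
  shows "Poly_Mapping.keys (Zpoly S :: (nat \<Rightarrow>\<^sub>0 nat) \<Rightarrow>\<^sub>0 'a::field) \<subseteq> Mon n k"
proof
  fix G assume G: "G \<in> Poly_Mapping.keys (Zpoly S :: (nat \<Rightarrow>\<^sub>0 nat) \<Rightarrow>\<^sub>0 'a)"
  have sub: "S \<subseteq> tiered_edges n t" and cS: "card S = k" using assms slim_sub by (auto simp: Sl_def)
  have "goodp k {1..n} (Zpoly S :: (nat \<Rightarrow>\<^sub>0 nat) \<Rightarrow>\<^sub>0 'a)" using goodp_Zpoly[OF sub, where 'a='a] cS by simp
  then have "Poly_Mapping.keys G \<subseteq> {1..n}" "dg G = k" using G unfolding goodp_def by blast+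
  then show "G \<in> Mon n k" by (rule in_Mon)
qed

definition Row :: "'a itself \<Rightarrow> nat \<Rightarrow> (nat \<Rightarrow> nat) \<Rightarrow> nat \<Rightarrow> (nat \<Rightarrow>\<^sub>0 nat) \<Rightarrow> (((nat \<times> nat) \<Rightarrow>\<^sub>0 nat) \<Rightarrow>\<^sub>0 'a::field)" where
  "Row _ n t k G = (\<Sum>S\<in>Sl n t k. Poly_Mapping.single (ind S) (Poly_Mapping.lookup (Zpoly S :: (nat \<Rightarrow>\<^sub>0 nat) \<Rightarrow>\<^sub>0 'a) G))"

lemma lookup_Row: "S \<in> Sl n t k \<Longrightarrow> Poly_Mapping.lookup (Row TYPE('a::field) n t k G) (ind S) = Poly_Mapping.lookup (Zpoly S :: (nat \<Rightarrow>\<^sub>0 nat) \<Rightarrow>\<^sub>0 'a) G"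
  unfolding Row_def by (rule lookup_sum_ind)

lemma pi_Xp: "pi n t k (Xp TYPE('a::field) n t k f) = sc (of_nat (fm (M k f))) (Row TYPE('a) n t k (M k f))"
proof -
  have "pi n t k (Xp TYPE('a) n t k f) = (\<Sum>S\<in>Sl n t k. Poly_Mapping.single (ind S) (of_nat (fm (M k f)) * Poly_Mapping.lookup (Zpoly S :: (nat \<Rightarrow>\<^sub>0 nat) \<Rightarrow>\<^sub>0 'a) (M k f)))"
    unfolding pi_def
  proof (rule sum.cong)
    fix S assume "S \<in> Sl n t k"
    then have "S \<subseteq> tiered_edges n t" "card S = k" using slim_sub by (auto simp: Sl_def)
    from star[where 'a='a, OF this, of f] show "Poly_Mapping.single (ind S) (Poly_Mapping.lookup (Xp TYPE('a) n t k f) (ind S))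
      = Poly_Mapping.single (ind S) (of_nat (fm (M k f)) * Poly_Mapping.lookup (Zpoly S :: (nat \<Rightarrow>\<^sub>0 nat) \<Rightarrow>\<^sub>0 'a) (M k f))"
      by (simp add: Xp_def)
  qed simp
  also have "\<dots> = sc (of_nat (fm (M k f))) (Row TYPE('a) n t k (M k f))"
    unfolding Row_def by (simp add: VS.scale_sum_right sc_single)
  finally show ?thesis .
qed

lemma span_pi_C:
  "VS.span (pi n t k ` C_gens TYPE('a::field_char_0) n t k) = VS.span (Row TYPE('a) n t k ` Mon n k)"
proof (subst VS.span_eq, intro conjI subsetI)
  fix x assume "x \<in> pi n t k ` C_gens TYPE('a) n t k"
  then obtain f where f: "f \<in> Fs n k" "x = pi n t k (Xp TYPE('a) n t k f)" unfolding C_gens_eq by blast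
  have "Row TYPE('a) n t k (M k f) \<in> Row TYPE('a) n t k ` Mon n k" using f(1) by (auto simp: Mon_def)
  then show "x \<in> VS.span (Row TYPE('a) n t k ` Mon n k)"
    unfolding f(2) pi_Xp by (intro VS.span_scale VS.span_base)
next
  fix x assume "x \<in> Row TYPE('a) n t k ` Mon n k"
  then obtain f where f: "f \<in> Fs n k" "x = Row TYPE('a) n t k (M k f)" unfolding Mon_def by blast
  define d :: 'a where "d = of_nat (fm (M k f))"
  have d0: "d \<noteq> 0" unfolding d_def using fm_pos[of "M k f"] by simp
  have "x = sc (1 / d) (pi n t k (Xp TYPE('a) n t k f))"
    unfolding f(2) pi_Xp d_def[symmetric] using d0 by simp
  moreover have "pi n t k (Xp TYPE('a) n t k f) \<in> pi n t k ` C_gens TYPE('a) n t k"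
    using f(1) unfolding C_gens_eq by blast
  ultimately show "x \<in> VS.span (pi n t k ` C_gens TYPE('a) n t k)"
    by (metis VS.span_base VS.span_scale)
qed

lemma rank_eq: "VS.dim (Row TYPE('a::field) n t k ` Mon n k) = VS.dim ((Zpoly :: _ \<Rightarrow> (nat \<Rightarrow>\<^sub>0 nat) \<Rightarrow>\<^sub>0 'a) ` Sl n t k)"
proof (rule antisym)
  have "VS.dim ((\<lambda>G. \<Sum>S\<in>Sl n t k. sc (Poly_Mapping.lookup (Zpoly S :: (nat \<Rightarrow>\<^sub>0 nat) \<Rightarrow>\<^sub>0 'a) G) (Poly_Mapping.single (ind S) (1::'a))) ` Mon n k)
     \<le> VS.dim ((Zpoly :: _ \<Rightarrow> (nat \<Rightarrow>\<^sub>0 nat) \<Rightarrow>\<^sub>0 'a) ` Sl n t k)"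
    by (rule rank_le[where \<mu> = id]) (simp_all add: finite_Sl)
  moreover have "(\<lambda>G. \<Sum>S\<in>Sl n t k. sc (Poly_Mapping.lookup (Zpoly S :: (nat \<Rightarrow>\<^sub>0 nat) \<Rightarrow>\<^sub>0 'a) G) (Poly_Mapping.single (ind S) (1::'a))) ` Mon n k
     = Row TYPE('a) n t k ` Mon n k"
    by (rule image_cong) (simp_all add: Row_def sc_single)
  ultimately show "VS.dim (Row TYPE('a) n t k ` Mon n k) \<le> VS.dim ((Zpoly :: _ \<Rightarrow> (nat \<Rightarrow>\<^sub>0 nat) \<Rightarrow>\<^sub>0 'a) ` Sl n t k)"
    by simp
next
  have "VS.dim ((\<lambda>S. \<Sum>G\<in>Mon n k. sc (Poly_Mapping.lookup (Zpoly S :: (nat \<Rightarrow>\<^sub>0 nat) \<Rightarrow>\<^sub>0 'a) G) (Poly_Mapping.single G (1::'a))) ` Sl n t k)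
     \<le> VS.dim (Row TYPE('a) n t k ` Mon n k)"
    by (rule rank_le[where \<mu> = ind]) (simp_all add: finite_Mon lookup_Row)
  moreover have "(\<lambda>S. \<Sum>G\<in>Mon n k. sc (Poly_Mapping.lookup (Zpoly S :: (nat \<Rightarrow>\<^sub>0 nat) \<Rightarrow>\<^sub>0 'a) G) (Poly_Mapping.single G (1::'a))) ` Sl n t k
     = (Zpoly :: _ \<Rightarrow> (nat \<Rightarrow>\<^sub>0 nat) \<Rightarrow>\<^sub>0 'a) ` Sl n t k"
  proof (rule image_cong)
    fix S assume "S \<in> Sl n t k"
    then show "(\<Sum>G\<in>Mon n k. sc (Poly_Mapping.lookup (Zpoly S :: (nat \<Rightarrow>\<^sub>0 nat) \<Rightarrow>\<^sub>0 'a) G) (Poly_Mapping.single G (1::'a))) = Zpoly S"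
      using sum_single[OF finite_Mon keys_Zpoly_Mon] by (simp add: sc_single)
  qed simp
  ultimately show "VS.dim ((Zpoly :: _ \<Rightarrow> (nat \<Rightarrow>\<^sub>0 nat) \<Rightarrow>\<^sub>0 'a) ` Sl n t k) \<le> VS.dim (Row TYPE('a) n t k ` Mon n k)"
    by simp
qed

section \<open>The space S\<close>

lemma homog_goodp: "homog k p \<longleftrightarrow> goodp k UNIV p"
  by (simp add: homog_def goodp_def dg_def)

lemma goodp_mono: "goodp d A p \<Longrightarrow> A \<subseteq> B \<Longrightarrow> goodp d B p"
  unfolding goodp_def by blast

lemma goodp_Zpoly_UNIV: "slim n t H \<Longrightarrow> goodp (card H) UNIV (Zpoly H :: (nat \<Rightarrow>\<^sub>0 nat) \<Rightarrow>\<^sub>0 'a::field)"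
  using goodp_mono[OF goodp_Zpoly[OF slim_sub]] by blast

lemma S_hom: "{p \<in> S_space TYPE('a::field) n t. homog k p} = VS.span ((Zpoly :: _ \<Rightarrow> (nat \<Rightarrow>\<^sub>0 nat) \<Rightarrow>\<^sub>0 'a) ` Sl n t k)"
proof -
  let ?X = "(Zpoly :: _ \<Rightarrow> (nat \<Rightarrow>\<^sub>0 nat) \<Rightarrow>\<^sub>0 'a) ` {H. slim n t H}"
  let ?X1 = "(Zpoly :: _ \<Rightarrow> (nat \<Rightarrow>\<^sub>0 nat) \<Rightarrow>\<^sub>0 'a) ` Sl n t k"
  have SS: "S_space TYPE('a) n t = VS.span ?X"
    unfolding S_space_def by (simp add: setcompr_eq_image)
  have X1X: "?X1 \<subseteq> ?X" by (auto simp: Sl_def)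
  have fX: "finite ?X" using finite_slims by simp
  have gX1: "goodp k UNIV x" if "x \<in> ?X1" for x
    using that goodp_Zpoly_UNIV by (auto simp: Sl_def)
  show ?thesis
  proof
    show "VS.span ?X1 \<subseteq> {p \<in> S_space TYPE('a) n t. homog k p}"
    proof
      fix x assume x: "x \<in> VS.span ?X1"
      have "x \<in> S_space TYPE('a) n t" unfolding SS using VS.span_mono[OF X1X] x by blast
      moreover have "goodp k UNIV x" by (rule goodp_span[OF gX1 x])
      ultimately show "x \<in> {p \<in> S_space TYPE('a) n t. homog k p}" by (simp add: homog_goodp)
    qed
  next
    show "{p \<in> S_space TYPE('a) n t. homog k p} \<subseteq> VS.span ?X1"
    proof
      fix p assume "p \<in> {p \<in> S_space TYPE('a) n t. homog k p}"
      then have p: "p \<in> VS.span ?X" "goodp k UNIV p" unfolding SS by (auto simp: homog_goodp)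
      obtain u where u: "p = (\<Sum>x\<in>?X. sc (u x) x)" using p(1) unfolding VS.span_finite[OF fX] by blast
      define q1 where "q1 = (\<Sum>x\<in>?X1. sc (u x) x)"
      define q2 where "q2 = (\<Sum>x\<in>?X - ?X1. sc (u x) x)"
      have pq: "p = q2 + q1" unfolding u q1_def q2_def by (rule sum.subset_diff[OF X1X fX])
      have g1: "goodp k UNIV q1" unfolding q1_def by (intro goodp_sum goodp_sc gX1)
      have g2: "goodp k UNIV q2" using goodp_diff[OF p(2) g1] pq by (simp add: algebra_simps)
      have "Poly_Mapping.keys q2 = {}"
      proof (rule ccontr)
        assume "Poly_Mapping.keys q2 \<noteq> {}"
        then obtain m where m: "m \<in> Poly_Mapping.keys q2" by blast
        then have "dg m = k" using g2 unfolding goodp_def by blast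
        from m have "m \<in> (\<Union>x\<in>?X - ?X1. Poly_Mapping.keys (sc (u x) x))"
          using keys_sum[of "\<lambda>x. sc (u x) x" "?X - ?X1"] unfolding q2_def by blast
        then obtain x where x: "x \<in> ?X - ?X1" "m \<in> Poly_Mapping.keys (sc (u x) x)" by blast
        from x(1) obtain H where H: "slim n t H" "x = Zpoly H" "x \<notin> ?X1" by blast
        have "card H \<noteq> k" using H by (auto simp: Sl_def)
        moreover have "m \<in> Poly_Mapping.keys x" using x(2) keys_sc by blast
        then have "dg m = card H" using goodp_Zpoly_UNIV[OF H(1), where 'a='a] H(2) unfolding goodp_def by blast
        ultimately show False using \<open>dg m = k\<close> by simp
      qed
      then have "q2 = 0" by simp
      then have pq1: "p = q1" using pq by simp
      show "p \<in> VS.span ?X1"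
        unfolding pq1 q1_def by (rule VS.span_sum) (intro VS.span_scale VS.span_base)
    qed
  qed
qed

theorem mainTheorem4:
  fixes n m k :: nat and t :: "nat \<Rightarrow> nat"
  assumes "t ` {1..n} = {1..m}"
  shows "dim_C TYPE('a::field_char_0) n t k = dim_S TYPE('a) n t k"
proof -
  define V where "V = VS.span (C_gens TYPE('a) n t k)"
  have good: "goodp k (tiered_edges n t) x" if "x \<in> V" for x
  proof (rule goodp_span[OF _ that[unfolded V_def]])
    fix y assume "y \<in> C_gens TYPE('a) n t k"
    then show "goodp k (tiered_edges n t) y" unfolding C_gens_eq Xp_def using goodp_Xprod by blast
  qed
  have VI: "V \<inter> Phi_ideal TYPE('a) n t = V \<inter> {x. pi n t k x = 0}"
  proof (intro set_eqI iffI)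
    fix x assume x: "x \<in> V \<inter> Phi_ideal TYPE('a) n t"
    then have "\<forall>S\<in>Sl n t k. Poly_Mapping.lookup x (ind S) = 0" using C1a by blast
    then show "x \<in> V \<inter> {x. pi n t k x = 0}" using x by (simp add: pi_zero_iff)
  next
    fix x assume x: "x \<in> V \<inter> {x. pi n t k x = 0}"
    then have "\<forall>S\<in>Sl n t k. Poly_Mapping.lookup x (ind S) = 0" by (simp add: pi_zero_iff)
    with good[of x] x show "x \<in> V \<inter> Phi_ideal TYPE('a) n t" using C1b by blast
  qed
  have rn: "VS.dim V = VS.dim (V \<inter> {x. pi n t k x = 0}) + VS.dim (pi n t k ` V)"
    unfolding V_def by (rule rank_nullity[OF hom_pi finite_C_gens])
  have "dim_C TYPE('a) n t k = VS.dim (pi n t k ` V)"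
    unfolding dim_C_def Let_def V_def[symmetric] VI using rn by simp
  also have "pi n t k ` V = VS.span (pi n t k ` C_gens TYPE('a) n t k)"
    unfolding V_def by (rule module_hom.span_image[OF hom_pi, symmetric])
  also have "VS.dim \<dots> = VS.dim (Row TYPE('a) n t k ` Mon n k)"
    by (simp add: span_pi_C)
  also have "\<dots> = VS.dim ((Zpoly :: _ \<Rightarrow> (nat \<Rightarrow>\<^sub>0 nat) \<Rightarrow>\<^sub>0 'a) ` Sl n t k)"
    by (rule rank_eq)
  also have "\<dots> = dim_S TYPE('a) n t k"
    unfolding dim_S_def S_hom by simp
  finally show ?thesis .
qed

end
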